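(* Let $\mathcal X$ be an instance space and let $\mathcal H$ be a class of classifiers $\mathcal X\to\{0,1\}$ of finite VC dimension. Consider two disjoint demographic groups $A$ and $B$ (group membership is observed), a group-$B$ proportion $r\in(0,1)$, distributions $\mathcal D_A,\mathcal D_B$ on $\mathcal X$, and classifiers $h_A^*,h_B^*\in\mathcal H$ such that $$p:=\Pr_{x\sim\mathcal D_A}[h_A^*(x)=1]=\Pr_{x\sim\mathcal D_B}[h_B^*(x)=1],\qquad p\in(0,1].$$ Let $\eta\in[0,1/2)$, $\beta_{POS},\beta_{NEG}\in(0,1]$, $\nu\in[0,1)$, and let the true and biased distributions be as described in the context. Assume $$(1-r)(1-2\eta)+r\big((1-\eta)\beta_{POS}(1-2\nu)-\eta\beta_{NEG}\big)>0$$ and $$(1-r)(1-2\eta)+r\big((1-\eta)\beta_{NEG}-(1-2\nu)\beta_{POS}\,\eta\big)>0.$$ Then $h^*=(h_A^*,h_B^* )$ satisfies Equal Opportunity on the biased distribution and has the lowest biased error among all pairs of classifiers $(h_A,h_B)$ satisfying Equal Opportunity on the biased distribution; thus $h^*$ is recovered by Equal-Opportunity-constrained ERM on the biased distribution.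
   Context: True distribution: an example is generated by first drawing the group, $B$ with probability $r$ and $A$ with probability $1-r$; then $x\sim\mathcal D_B$ (resp. $\mathcal D_A$); then, writing $h^*(x)=h_g^*(x)$ for the group $g$ of $x$, the true label is $y=1-h^*(x)$ with probability $\eta$ and $y=h^*(x)$ otherwise, independently. Biased distribution: starting from a true example $(x,y)$, if $x\in B$ and $y=1$ the example is kept with probability $\beta_{POS}$ (discarded otherwise), if $x\in B$ and $y=0$ it is kept with probability $\beta_{NEG}$, and examples of group $A$ are always kept; then each kept example with $x\in B$ and $y=1$ has its label flipped to $0$ independently with probability $\nu$. The biased distribution is the distribution of the kept examples with their (possibly flipped) observed labels. A classifier is a pair $h=(h_A,h_B)$ of functions $\mathcal X\to\{0,1\}$, predicting $h_g(x)$ on an example of group $g$. Its biased error is the probability, under the biased distribution, that its prediction differs from the observed label. $h$ satisfies Equal Opportunity on a distribution if $\Pr[h_A(x)=1\mid y=1,x\in A]=\Pr[h_B(x)=1\mid y=1,x\in B]$ under that distribution (with $y$ the label in that distribution). *)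

theory Defs
  imports "HOL-Probability.Probability"
begin

text \<open>Groups. Labels are booleans (True = 1, False = 0).\<close>
datatype grp = GA | GB

definition shatters :: "('a \<Rightarrow> bool) set \<Rightarrow> 'a set \<Rightarrow> bool" where
  "shatters H S \<longleftrightarrow> (\<forall>T \<subseteq> S. \<exists>h \<in> H. \<forall>x \<in> S. (h x \<longleftrightarrow> x \<in> T))"

definition finite_VC_dim :: "('a \<Rightarrow> bool) set \<Rightarrow> bool" where
  "finite_VC_dim H \<longleftrightarrow> (\<exists>d::nat. \<forall>S. finite S \<and> shatters H S \<longrightarrow> card S \<le> d)"

definition true_label_prob :: "real \<Rightarrow> bool \<Rightarrow> bool \<Rightarrow> real" where
  "true_label_prob eta hx y = (if y = hx then 1 - eta else eta)"

text \<open>Unnormalised mass, under the biased process, of the event E on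
  (group, x, observed label). Group A (prob 1-r): x ~ DA, true label noisy, always kept.
  Group B (prob r): x ~ DB, true label noisy; kept w.p. bpos (label 1) / bneg (label 0);
  a kept label 1 is flipped to 0 w.p. nu.\<close>
definition biased_mass ::
  "real \<Rightarrow> real \<Rightarrow> real \<Rightarrow> real \<Rightarrow> real \<Rightarrow> 'a measure \<Rightarrow> 'a measure \<Rightarrow>
   ('a \<Rightarrow> bool) \<Rightarrow> ('a \<Rightarrow> bool) \<Rightarrow> (grp \<Rightarrow> 'a \<Rightarrow> bool \<Rightarrow> bool) \<Rightarrow> real" where
  "biased_mass r eta bpos bneg nu DA DB hsA hsB E =
     (1 - r) * (\<integral>x. (\<Sum>y\<in>UNIV. true_label_prob eta (hsA x) y * of_bool (E GA x y)) \<partial>DA)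
   + r * (\<integral>x. true_label_prob eta (hsB x) True * bpos *
                 ((1 - nu) * of_bool (E GB x True) + nu * of_bool (E GB x False))
             + true_label_prob eta (hsB x) False * bneg * of_bool (E GB x False) \<partial>DB)"

definition biased_prob ::
  "real \<Rightarrow> real \<Rightarrow> real \<Rightarrow> real \<Rightarrow> real \<Rightarrow> 'a measure \<Rightarrow> 'a measure \<Rightarrow>
   ('a \<Rightarrow> bool) \<Rightarrow> ('a \<Rightarrow> bool) \<Rightarrow> (grp \<Rightarrow> 'a \<Rightarrow> bool \<Rightarrow> bool) \<Rightarrow> real" where
  "biased_prob r eta bpos bneg nu DA DB hsA hsB E =
     biased_mass r eta bpos bneg nu DA DB hsA hsB E /
     biased_mass r eta bpos bneg nu DA DB hsA hsB (\<lambda>_ _ _. True)"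

definition pred :: "('a \<Rightarrow> bool) \<Rightarrow> ('a \<Rightarrow> bool) \<Rightarrow> grp \<Rightarrow> 'a \<Rightarrow> bool" where
  "pred hA hB g x = (case g of GA \<Rightarrow> hA x | GB \<Rightarrow> hB x)"

definition biased_error ::
  "real \<Rightarrow> real \<Rightarrow> real \<Rightarrow> real \<Rightarrow> real \<Rightarrow> 'a measure \<Rightarrow> 'a measure \<Rightarrow>
   ('a \<Rightarrow> bool) \<Rightarrow> ('a \<Rightarrow> bool) \<Rightarrow> ('a \<Rightarrow> bool) \<Rightarrow> ('a \<Rightarrow> bool) \<Rightarrow> real" where
  "biased_error r eta bpos bneg nu DA DB hsA hsB hA hB =
     biased_prob r eta bpos bneg nu DA DB hsA hsB (\<lambda>g x y. pred hA hB g x \<noteq> y)"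

definition EO_biased ::
  "real \<Rightarrow> real \<Rightarrow> real \<Rightarrow> real \<Rightarrow> real \<Rightarrow> 'a measure \<Rightarrow> 'a measure \<Rightarrow>
   ('a \<Rightarrow> bool) \<Rightarrow> ('a \<Rightarrow> bool) \<Rightarrow> ('a \<Rightarrow> bool) \<Rightarrow> ('a \<Rightarrow> bool) \<Rightarrow> bool" where
  "EO_biased r eta bpos bneg nu DA DB hsA hsB hA hB \<longleftrightarrow>
     biased_prob r eta bpos bneg nu DA DB hsA hsB (\<lambda>g x y. g = GA \<and> y \<and> hA x) /
       biased_prob r eta bpos bneg nu DA DB hsA hsB (\<lambda>g x y. g = GA \<and> y)
   = biased_prob r eta bpos bneg nu DA DB hsA hsB (\<lambda>g x y. g = GB \<and> y \<and> hB x) /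
       biased_prob r eta bpos bneg nu DA DB hsA hsB (\<lambda>g x y. g = GB \<and> y)"

end

theory Submission
  imports Defs
begin


lemma meas_set:
  assumes "g \<in> measurable M (count_space UNIV)" "h \<in> measurable M (count_space UNIV)"
  shows "{x \<in> space M. g x = a \<and> h x = b} \<in> sets M"
proof -
  have "{x \<in> space M. g x = a \<and> h x = b} = g -` {a} \<inter> space M \<inter> (h -` {b} \<inter> space M)" by auto
  moreover have "g -` {a} \<inter> space M \<in> sets M" using measurable_sets[OF assms(1)] by simp
  moreover have "h -` {b} \<inter> space M \<in> sets M" using measurable_sets[OF assms(2)] by simp
  ultimately show ?thesis by simp
qed

lemma four:
  fixes f :: "bool \<Rightarrow> bool \<Rightarrow> real"
  assumes P: "prob_space M" and g: "g \<in> measurable M (count_space UNIV)" and h: "h \<in> measurable M (count_space UNIV)"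
  shows "integral\<^sup>L M (\<lambda>x. f (g x) (h x)) =
     f True True * measure M {x \<in> space M. g x = True \<and> h x = True}
   + f True False * measure M {x \<in> space M. g x = True \<and> h x = False}
   + f False True * measure M {x \<in> space M. g x = False \<and> h x = True}
   + f False False * measure M {x \<in> space M. g x = False \<and> h x = False}"
proof -
  interpret prob_space M by fact
  define S where "S a b = {x \<in> space M. g x = a \<and> h x = b}" for a b
  have S: "S a b \<in> sets M" for a b unfolding S_def by (rule meas_set[OF g h])
  have int: "integrable M (indicator (S a b) :: _ \<Rightarrow> real)" for a b
    using S by (simp add: integrable_indicator_iff less_top[symmetric])
  have "integral\<^sup>L M (\<lambda>x. f (g x) (h x)) = integral\<^sup>L M (\<lambda>x.
      f True True * indicator (S True True) x + f True False * indicator (S True False) x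
    + f False True * indicator (S False True) x + f False False * indicator (S False False) x)"
    by (rule Bochner_Integration.integral_cong) (auto simp: S_def indicator_def)
  also have "\<dots> = f True True * measure M (S True True) + f True False * measure M (S True False)
    + f False True * measure M (S False True) + f False False * measure M (S False False)"
    using int S by (simp add: Int_absorb2 sets.sets_into_space)
  finally show ?thesis unfolding S_def .
qed

definition Q :: "'a measure \<Rightarrow> ('a \<Rightarrow> bool) \<Rightarrow> ('a \<Rightarrow> bool) \<Rightarrow> bool \<Rightarrow> bool \<Rightarrow> real" where
  "Q M g h a b = measure M {x \<in> space M. g x = a \<and> h x = b}"

definition sum4 :: "(bool \<Rightarrow> bool \<Rightarrow> real) \<Rightarrow> 'a measure \<Rightarrow> ('a \<Rightarrow> bool) \<Rightarrow> ('a \<Rightarrow> bool) \<Rightarrow> real" where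
  "sum4 f M g h = f True True * Q M g h True True + f True False * Q M g h True False
     + f False True * Q M g h False True + f False False * Q M g h False False"

lemma mass_formula:
  assumes DA: "prob_space DA" and DB: "prob_space DB"
    and m1: "hsA \<in> measurable DA (count_space UNIV)" and m2: "hA \<in> measurable DA (count_space UNIV)"
    and m3: "hsB \<in> measurable DB (count_space UNIV)" and m4: "hB \<in> measurable DB (count_space UNIV)"
    and EA: "\<And>x y. E GA x y = EA (hA x) y" and EB: "\<And>x y. E GB x y = EB (hB x) y"
  shows "biased_mass r eta bpos bneg nu DA DB hsA hsB E =
    (1 - r) * sum4 (\<lambda>a b. \<Sum>y\<in>UNIV. true_label_prob eta a y * of_bool (EA b y)) DA hsA hA
  + r * sum4 (\<lambda>a b. true_label_prob eta a True * bpos *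
                 ((1 - nu) * of_bool (EB b True) + nu * of_bool (EB b False))
             + true_label_prob eta a False * bneg * of_bool (EB b False)) DB hsB hB"
  unfolding biased_mass_def EA EB sum4_def Q_def
  using four[OF DA m1 m2, of "\<lambda>a b. \<Sum>y\<in>UNIV. true_label_prob eta a y * of_bool (EA b y)"]
    four[OF DB m3 m4, of "\<lambda>a b. true_label_prob eta a True * bpos *
                 ((1 - nu) * of_bool (EB b True) + nu * of_bool (EB b False))
             + true_label_prob eta a False * bneg * of_bool (EB b False)"]
  by simp

lemma Q_sums:
  assumes P: "prob_space M" and g: "g \<in> measurable M (count_space UNIV)" and h: "h \<in> measurable M (count_space UNIV)"
  shows "Q M g h True True + Q M g h True False = measure M {x \<in> space M. g x}"
    "Q M g h False True + Q M g h False False = 1 - measure M {x \<in> space M. g x}"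
    "Q M g h a b \<ge> 0"
proof -
  interpret prob_space M by fact
  have S: "{x \<in> space M. g x = a \<and> h x = b} \<in> sets M" for a b by (rule meas_set[OF g h])
  have G: "{x \<in> space M. g x} \<in> sets M" using meas_set[OF g g, of True True] by simp
  have "measure M {x \<in> space M. g x} = measure M ({x \<in> space M. g x = True \<and> h x = True} \<union> {x \<in> space M. g x = True \<and> h x = False})"
    by (rule arg_cong[where f="measure M"]) auto
  also have "\<dots> = Q M g h True True + Q M g h True False" unfolding Q_def
    by (rule finite_measure_Union[OF S S]) auto
  finally show "Q M g h True True + Q M g h True False = measure M {x \<in> space M. g x}" by simp
  have "1 - measure M {x \<in> space M. g x} = measure M (space M - {x \<in> space M. g x})"
    using prob_compl[OF G] by simp
  also have "\<dots> = measure M ({x \<in> space M. g x = False \<and> h x = True} \<union> {x \<in> space M. g x = False \<and> h x = False})"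
    by (rule arg_cong[where f="measure M"]) auto
  also have "\<dots> = Q M g h False True + Q M g h False False" unfolding Q_def
    by (rule finite_measure_Union[OF S S]) auto
  finally show "Q M g h False True + Q M g h False False = 1 - measure M {x \<in> space M. g x}" by simp
  show "Q M g h a b \<ge> 0" unfolding Q_def by simp
qed

lemma Q_diag:
  assumes P: "prob_space M" and g: "g \<in> measurable M (count_space UNIV)"
  shows "Q M g g True True = measure M {x \<in> space M. g x}" "Q M g g True False = 0"
    "Q M g g False True = 0" "Q M g g False False = 1 - measure M {x \<in> space M. g x}"
  using Q_sums[OF P g g] by (auto simp: Q_def)


lemma cancel_aux: "(Z::real) \<noteq> 0 \<Longrightarrow> c \<noteq> 0 \<Longrightarrow> (c * X / Z) / (c * q / Z) = X / q"
  by simp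

lemma general:
  assumes DA: "prob_space DA" and DB: "prob_space DB"
    and m1: "hsA \<in> measurable DA (count_space UNIV)" and m2: "hA \<in> measurable DA (count_space UNIV)"
    and m3: "hsB \<in> measurable DB (count_space UNIV)" and m4: "hB \<in> measurable DB (count_space UNIV)"
    and r: "0 < r" "r < 1"
    and p_eq: "measure DA {x \<in> space DA. hsA x} = measure DB {x \<in> space DB. hsB x}"
    and p_pos: "0 < measure DA {x \<in> space DA. hsA x}"
    and eta: "0 \<le> eta" "eta < 1/2"
    and bpos: "0 < bpos" and bneg: "0 < bneg" and nu: "0 \<le> nu" "nu < 1"
  assumes p_def: "p = measure DA {x \<in> space DA. hsA x}"
    and aA_def: "aA = Q DA hsA hA True True" and bA_def: "bA = Q DA hsA hA False True"
    and aB_def: "aB = Q DB hsB hB True True" and bB_def: "bB = Q DB hsB hB False True"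
    and Z_def: "Z = (1 - r) + r * (((1 - eta) * p + eta * (1 - p)) * bpos + (eta * p + (1 - eta) * (1 - p)) * bneg)"
  shows "Z > 0"
    "EO_biased r eta bpos bneg nu DA DB hsA hsB hA hB \<longleftrightarrow> (1 - eta) * aA + eta * bA = (1 - eta) * aB + eta * bB"
    "biased_error r eta bpos bneg nu DA DB hsA hsB hA hB =
      ((1 - r) * (eta * aA + (1 - eta) * (p - aA) + (1 - eta) * bA + eta * (1 - p - bA))
      + r * (aB * ((1 - eta) * bpos * nu + eta * bneg) + (p - aB) * (1 - eta) * bpos * (1 - nu)
           + bB * (eta * bpos * nu + (1 - eta) * bneg) + (1 - p - bB) * eta * bpos * (1 - nu))) / Z"
proof -
  note sA = Q_sums[OF DA m1 m2] and sB = Q_sums[OF DB m3 m4]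
  have p1: "p \<le> 1" unfolding p_def using prob_space.prob_le_1[OF DA] by simp
  have pp: "p > 0" using p_pos p_def by simp
  have eqs: "Q DA hsA hA True True = aA" "Q DA hsA hA False True = bA"
    "Q DB hsB hB True True = aB" "Q DB hsB hB False True = bB"
    "Q DA hsA hA True False = p - aA" "Q DA hsA hA False False = 1 - p - bA"
    "Q DB hsB hB True False = p - aB" "Q DB hsB hB False False = 1 - p - bB"
    using sA(1,2) sB(1,2) p_eq unfolding p_def aA_def bA_def aB_def bB_def by linarith+
  have mZ: "biased_mass r eta bpos bneg nu DA DB hsA hsB (\<lambda>_ _ _. True) = Z"
    apply (subst mass_formula[OF DA DB m1 m2 m3 m4, where EA="\<lambda>_ _. True" and EB="\<lambda>_ _. True"])
      apply simp apply simp
    unfolding sum4_def true_label_prob_def Z_def eqs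
    by (simp add: UNIV_bool algebra_simps)
  show Zp: "Z > 0" unfolding Z_def
  proof -
    have "((1 - eta) * p + eta * (1 - p)) * bpos \<ge> 0" using eta pp p1 bpos by simp
    moreover have "(eta * p + (1 - eta) * (1 - p)) * bneg \<ge> 0" using eta pp p1 bneg by simp
    ultimately show "(1 - r) + r * (((1 - eta) * p + eta * (1 - p)) * bpos + (eta * p + (1 - eta) * (1 - p)) * bneg) > 0"
      using r by (smt (verit) mult_nonneg_nonneg)
  qed
  have mE: "biased_mass r eta bpos bneg nu DA DB hsA hsB (\<lambda>g x y. pred hA hB g x \<noteq> y) =
      ((1 - r) * (eta * aA + (1 - eta) * (p - aA) + (1 - eta) * bA + eta * (1 - p - bA))
      + r * (aB * ((1 - eta) * bpos * nu + eta * bneg) + (p - aB) * (1 - eta) * bpos * (1 - nu)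
           + bB * (eta * bpos * nu + (1 - eta) * bneg) + (1 - p - bB) * eta * bpos * (1 - nu)))"
    apply (subst mass_formula[OF DA DB m1 m2 m3 m4, where EA="\<lambda>b y. b \<noteq> y" and EB="\<lambda>b y. b \<noteq> y"])
      apply (simp add: pred_def) apply (simp add: pred_def)
    unfolding sum4_def true_label_prob_def eqs
    by (simp add: UNIV_bool algebra_simps)
  show "biased_error r eta bpos bneg nu DA DB hsA hsB hA hB = 
      ((1 - r) * (eta * aA + (1 - eta) * (p - aA) + (1 - eta) * bA + eta * (1 - p - bA))
      + r * (aB * ((1 - eta) * bpos * nu + eta * bneg) + (p - aB) * (1 - eta) * bpos * (1 - nu)
           + bB * (eta * bpos * nu + (1 - eta) * bneg) + (1 - p - bB) * eta * bpos * (1 - nu))) / Z"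
    unfolding biased_error_def biased_prob_def mE mZ ..
  show "EO_biased r eta bpos bneg nu DA DB hsA hsB hA hB \<longleftrightarrow> (1 - eta) * aA + eta * bA = (1 - eta) * aB + eta * bB"
  proof -
    define q where "q = (1 - eta) * p + eta * (1 - p)"
    have qp: "q > 0"
    proof -
      have "(1 - eta) * p > 0" using eta pp by simp
      moreover have "eta * (1 - p) \<ge> 0" using eta p1 by simp
      ultimately show ?thesis unfolding q_def by linarith
    qed
    have k1: "(1 - r) > 0" "bpos * (1 - nu) > 0" "r > 0" using r bpos nu by auto
    have n1: "biased_mass r eta bpos bneg nu DA DB hsA hsB (\<lambda>g x y. g = GA \<and> y \<and> hA x) = (1 - r) * ((1 - eta) * aA + eta * bA)"
      apply (subst mass_formula[OF DA DB m1 m2 m3 m4, where EA="\<lambda>b y. y \<and> b" and EB="\<lambda>b y. False"])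
        apply simp apply simp
      unfolding sum4_def true_label_prob_def eqs
      by (simp add: UNIV_bool algebra_simps)
    have n2: "biased_mass r eta bpos bneg nu DA DB hsA hsB (\<lambda>g x y. g = GA \<and> y) = (1 - r) * q"
      apply (subst mass_formula[OF DA DB m1 m2 m3 m4, where EA="\<lambda>b y. y" and EB="\<lambda>b y. False"])
        apply simp apply simp
      unfolding sum4_def true_label_prob_def eqs q_def
      by (simp add: UNIV_bool algebra_simps)
    have n3: "biased_mass r eta bpos bneg nu DA DB hsA hsB (\<lambda>g x y. g = GB \<and> y \<and> hB x) = r * (bpos * (1 - nu)) * ((1 - eta) * aB + eta * bB)"
      apply (subst mass_formula[OF DA DB m1 m2 m3 m4, where EA="\<lambda>b y. False" and EB="\<lambda>b y. y \<and> b"])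
        apply simp apply simp
      unfolding sum4_def true_label_prob_def eqs
      by (simp add: UNIV_bool algebra_simps)
    have n4: "biased_mass r eta bpos bneg nu DA DB hsA hsB (\<lambda>g x y. g = GB \<and> y) = r * (bpos * (1 - nu)) * q"
      apply (subst mass_formula[OF DA DB m1 m2 m3 m4, where EA="\<lambda>b y. False" and EB="\<lambda>b y. y"])
        apply simp apply simp
      unfolding sum4_def true_label_prob_def eqs q_def
      by (simp add: UNIV_bool algebra_simps)
    have Zn: "Z \<noteq> 0" using Zp by simp
    have c0: "r * (bpos * (1 - nu)) \<noteq> 0" and c1: "1 - r \<noteq> 0" using k1 by auto
    have e1: "((1 - r) * ((1 - eta) * aA + eta * bA) / Z) / ((1 - r) * q / Z) = ((1 - eta) * aA + eta * bA) / q"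
      using Zn c1 by simp
    have e2: "(r * (bpos * (1 - nu)) * ((1 - eta) * aB + eta * bB) / Z) / (r * (bpos * (1 - nu)) * q / Z) = ((1 - eta) * aB + eta * bB) / q"
      using Zn c0 by (rule cancel_aux)
    show ?thesis unfolding EO_biased_def biased_prob_def n1 n2 n3 n4 mZ e1 e2
      using qp by (simp add: divide_cancel_right)
  qed
qed

lemma core:
  fixes K c1 c2 eta uA bA uB bB :: real
  assumes K: "K > 0" and K1: "K + c1 > 0" and K2: "K + c2 > 0" and C: "c1 * eta + c2 * (1 - eta) \<ge> 0"
    and e0: "0 \<le> eta" and e1: "eta < 1" and nn: "uA \<ge> 0" "bA \<ge> 0" "uB \<ge> 0" "bB \<ge> 0"
    and eq: "eta * bA - (1 - eta) * uA = eta * bB - (1 - eta) * uB"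
  shows "K * (uA + bA) + c1 * uB + c2 * bB \<ge> 0"
proof -
  consider "c1 \<ge> 0" "c2 \<ge> 0" | "c1 < 0" | "c2 < 0" by linarith
  then show ?thesis
  proof cases
    case 1 then show ?thesis using K nn by (simp add: add_nonneg_nonneg)
  next
    case 2
    have pe: "1 - eta > 0" using e1 by simp
    have "(1 - eta) * (K * (uA + bA) + c1 * uB + c2 * bB) \<ge> 0"
    proof (cases "(1 - eta) * uB \<le> eta * bB")
      case True
      have a: "c1 * ((1 - eta) * uB) \<ge> c1 * (eta * bB)" using True 2 by (simp add: mult_left_mono_neg)
      have b: "(1 - eta) * (K * (uA + bA)) \<ge> 0" using pe K nn by simp
      have c: "bB * (c1 * eta + c2 * (1 - eta)) \<ge> 0" using C nn by simp
      show ?thesis using a b c by (simp add: algebra_simps)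
    next
      case False
      have a: "(1 - eta) * uA \<ge> (1 - eta) * uB - eta * bB" using eq e0 nn
        by (smt (verit) mult_nonneg_nonneg)
      have b: "K * ((1 - eta) * uA) \<ge> K * ((1 - eta) * uB - eta * bB)" using a K by simp
      have b2: "(1 - eta) * (K * bA) \<ge> 0" using pe K nn by simp
      have c0: "bB * (c1 * eta + c2 * (1 - eta)) \<ge> 0" using C nn by simp
      have c: "bB * (c2 * (1 - eta)) \<ge> bB * (- c1 * eta)" using c0 by (simp add: algebra_simps)
      have d: "(K + c1) * ((1 - eta) * uB - eta * bB) \<ge> 0" using K1 False by simp
      show ?thesis using b b2 c d by (simp add: algebra_simps)
    qed
    then show ?thesis using pe by (simp add: zero_le_mult_iff)
  next
    case 3
    have pe: "eta > 0"
    proof (rule ccontr)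
      assume "\<not> eta > 0" then have "eta = 0" using e0 by simp
      then show False using C 3 by simp
    qed
    have "eta * (K * (uA + bA) + c1 * uB + c2 * bB) \<ge> 0"
    proof (cases "eta * bB \<le> (1 - eta) * uB")
      case True
      have a: "c2 * (eta * bB) \<ge> c2 * ((1 - eta) * uB)" using True 3 by (simp add: mult_left_mono_neg)
      have b: "eta * (K * (uA + bA)) \<ge> 0" using pe K nn by simp
      have c: "uB * (c1 * eta + c2 * (1 - eta)) \<ge> 0" using C nn by simp
      show ?thesis using a b c by (simp add: algebra_simps)
    next
      case False
      have a: "eta * bA \<ge> eta * bB - (1 - eta) * uB" using eq e1 nn
        by (smt (verit) mult_nonneg_nonneg)
      have b: "K * (eta * bA) \<ge> K * (eta * bB - (1 - eta) * uB)" using a K by simp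
      have b2: "eta * (K * uA) \<ge> 0" using pe K nn by simp
      have c0: "uB * (c1 * eta + c2 * (1 - eta)) \<ge> 0" using C nn by simp
      have c: "uB * (c1 * eta) \<ge> uB * (- c2 * (1 - eta))" using c0 by (simp add: algebra_simps)
      have d: "(K + c2) * (eta * bB - (1 - eta) * uB) \<ge> 0" using K2 False by simp
      show ?thesis using b b2 c d by (simp add: algebra_simps)
    qed
    then show ?thesis using pe by (simp add: zero_le_mult_iff)
  qed
qed

theorem mainTheorem1:
  fixes H :: "('a \<Rightarrow> bool) set"
    and DA DB :: "'a measure"
    and hsA hsB :: "'a \<Rightarrow> bool"
    and r eta bpos bneg nu :: real
  assumes VC: "finite_VC_dim H"
    and DA: "prob_space DA" and DB: "prob_space DB"
    and hsA_H: "hsA \<in> H" and hsB_H: "hsB \<in> H"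
    and hsA_meas: "hsA \<in> measurable DA (count_space UNIV)"
    and hsB_meas: "hsB \<in> measurable DB (count_space UNIV)"
    and r: "0 < r" "r < 1"
    and p_eq: "measure DA {x \<in> space DA. hsA x} = measure DB {x \<in> space DB. hsB x}"
    and p_pos: "0 < measure DA {x \<in> space DA. hsA x}"
    and eta: "0 \<le> eta" "eta < 1/2"
    and bpos: "0 < bpos" "bpos \<le> 1"
    and bneg: "0 < bneg" "bneg \<le> 1"
    and nu: "0 \<le> nu" "nu < 1"
    and cond1: "(1 - r) * (1 - 2 * eta) + r * ((1 - eta) * bpos * (1 - 2 * nu) - eta * bneg) > 0"
    and cond2: "(1 - r) * (1 - 2 * eta) + r * ((1 - eta) * bneg - (1 - 2 * nu) * bpos * eta) > 0"
  shows "EO_biased r eta bpos bneg nu DA DB hsA hsB hsA hsB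
    \<and> (\<forall>hA hB. hA \<in> measurable DA (count_space UNIV) \<and> hB \<in> measurable DB (count_space UNIV)
        \<and> EO_biased r eta bpos bneg nu DA DB hsA hsB hA hB
        \<longrightarrow> biased_error r eta bpos bneg nu DA DB hsA hsB hsA hsB
            \<le> biased_error r eta bpos bneg nu DA DB hsA hsB hA hB)"
proof -
  define p where "p = measure DA {x \<in> space DA. hsA x}"
  define Z where "Z = (1 - r) + r * (((1 - eta) * p + eta * (1 - p)) * bpos + (eta * p + (1 - eta) * (1 - p)) * bneg)"
  note G = general[OF DA DB hsA_meas _ hsB_meas _ r p_eq p_pos eta bpos(1) bneg(1) nu p_def refl refl refl refl Z_def]
  note dA = Q_diag[OF DA hsA_meas] and dB = Q_diag[OF DB hsB_meas]
  have Zp: "Z > 0" using G(1)[OF hsA_meas hsB_meas] .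
  have EOs: "EO_biased r eta bpos bneg nu DA DB hsA hsB hsA hsB"
    using G(2)[OF hsA_meas hsB_meas] dA dB p_eq by simp
  have errs: "biased_error r eta bpos bneg nu DA DB hsA hsB hsA hsB =
      ((1 - r) * (eta * p + eta * (1 - p))
      + r * (p * ((1 - eta) * bpos * nu + eta * bneg) + (1 - p) * eta * bpos * (1 - nu))) / Z"
    using G(3)[OF hsA_meas hsB_meas] dA dB p_eq unfolding p_def by simp
  show ?thesis
  proof (intro conjI allI impI)
    show "EO_biased r eta bpos bneg nu DA DB hsA hsB hsA hsB" by (rule EOs)
    fix hA hB
    assume H: "hA \<in> measurable DA (count_space UNIV) \<and> hB \<in> measurable DB (count_space UNIV)
        \<and> EO_biased r eta bpos bneg nu DA DB hsA hsB hA hB"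
    then have mA: "hA \<in> measurable DA (count_space UNIV)" and mB: "hB \<in> measurable DB (count_space UNIV)"
      and eo: "EO_biased r eta bpos bneg nu DA DB hsA hsB hA hB" by auto
    define aA where "aA = Q DA hsA hA True True"
    define bA where "bA = Q DA hsA hA False True"
    define aB where "aB = Q DB hsB hB True True"
    define bB where "bB = Q DB hsB hB False True"
    note sA = Q_sums[OF DA hsA_meas mA] and sB = Q_sums[OF DB hsB_meas mB]
    have con: "(1 - eta) * aA + eta * bA = (1 - eta) * aB + eta * bB"
      using G(2)[OF mA mB] eo unfolding aA_def bA_def aB_def bB_def by simp
    have err: "biased_error r eta bpos bneg nu DA DB hsA hsB hA hB =
      ((1 - r) * (eta * aA + (1 - eta) * (p - aA) + (1 - eta) * bA + eta * (1 - p - bA))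
      + r * (aB * ((1 - eta) * bpos * nu + eta * bneg) + (p - aB) * (1 - eta) * bpos * (1 - nu)
           + bB * (eta * bpos * nu + (1 - eta) * bneg) + (1 - p - bB) * eta * bpos * (1 - nu))) / Z"
      using G(3)[OF mA mB] unfolding aA_def bA_def aB_def bB_def .
    have uA: "p - aA \<ge> 0" using sA(1)[symmetric] sA(3)[of True False] unfolding p_def aA_def by simp
    have uB: "p - aB \<ge> 0" using sB(1)[symmetric] sB(3)[of True False] p_eq unfolding p_def aB_def by simp
    have nnb: "bA \<ge> 0" "bB \<ge> 0" using sA(3) sB(3) unfolding bA_def bB_def by auto
    define K where "K = (1 - r) * (1 - 2 * eta)"
    define c1 where "c1 = r * ((1 - eta) * bpos * (1 - 2 * nu) - eta * bneg)"
    define c2 where "c2 = r * ((1 - eta) * bneg - eta * bpos * (1 - 2 * nu))"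
    have Kp: "K > 0" unfolding K_def using r eta by simp
    have K1: "K + c1 > 0" using cond1 unfolding K_def c1_def by simp
    have K2: "K + c2 > 0" using cond2 unfolding K_def c2_def by (simp add: algebra_simps)
    have C: "c1 * eta + c2 * (1 - eta) \<ge> 0"
    proof -
      have "c1 * eta + c2 * (1 - eta) = r * bneg * (1 - 2 * eta)" unfolding c1_def c2_def by (simp add: algebra_simps)
      also have "\<dots> \<ge> 0" using r bneg eta by simp
      finally show ?thesis .
    qed
    have cc: "eta * bA - (1 - eta) * (p - aA) = eta * bB - (1 - eta) * (p - aB)"
      using con by (simp add: algebra_simps)
    have D: "K * ((p - aA) + bA) + c1 * (p - aB) + c2 * bB \<ge> 0"
      by (rule core[OF Kp K1 K2 C eta(1) _ uA nnb(1) uB nnb(2) cc]) (use eta in simp)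
    have num: "((1 - r) * (eta * aA + (1 - eta) * (p - aA) + (1 - eta) * bA + eta * (1 - p - bA))
      + r * (aB * ((1 - eta) * bpos * nu + eta * bneg) + (p - aB) * (1 - eta) * bpos * (1 - nu)
           + bB * (eta * bpos * nu + (1 - eta) * bneg) + (1 - p - bB) * eta * bpos * (1 - nu)))
      - ((1 - r) * (eta * p + eta * (1 - p))
      + r * (p * ((1 - eta) * bpos * nu + eta * bneg) + (1 - p) * eta * bpos * (1 - nu)))
      = K * ((p - aA) + bA) + c1 * (p - aB) + c2 * bB"
      unfolding K_def c1_def c2_def by (simp add: algebra_simps)
    show "biased_error r eta bpos bneg nu DA DB hsA hsB hsA hsB
            \<le> biased_error r eta bpos bneg nu DA DB hsA hsB hA hB"
      unfolding errs err using Zp D num by (simp add: divide_right_mono)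
  qed
qed

end
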